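(* Let $\gamma_1,\gamma_2>0$ and consider the birth-death chain RDS $(\theta,\varphi)$ on $\mathbb{N}_0$ described in the context. Let $d\in\mathbb{Z}\setminus\{0\}$ and $I_d:=\{(x,y)\in\mathbb{N}_0^2 : x-y=d\}$. Then for every $(x_0,y_0)\in I_d$, \[ \mathbb{P}\big((\varphi^n_q(x_0),\varphi^n_q(y_0))\in I_d \ \text{for all } n\geq 0\big)=0, \] i.e. the two-point motion $(\varphi^n_q(x_0),\varphi^n_q(y_0))_{n\in\mathbb{N}_0}$ leaves $I_d$ almost surely.
   Context: Noise space: $\mathcal{Q}_+=\{q=(q_n)_{n\in\mathbb{N}_0}: q_n\in[0,1]\}$ with the product Borel $\sigma$-algebra and the product measure $\mathbb{P}=\lambda^{\mathbb{N}_0}$, $\lambda$ Lebesgue measure on $[0,1]$; shift $\theta(q_0,q_1,\dots)=(q_1,q_2,\dots)$. For $q\in\mathcal{Q}_+$ define $f_q:\mathbb{N}_0\to\mathbb{N}_0$ by $f_q(x)=x+1$ if $q_0<\frac{\gamma_1}{\gamma_1+\gamma_2x}$ and $f_q(x)=x-1$ otherwise (the embedded Markov chain of the birth-death reaction network $\emptyset\to\mathcal{S}$ at rate $\gamma_1$, $\mathcal{S}\to\emptyset$ at rate $\gamma_2x$). The cocycle is $\varphi^0_q(x)=x$ and $\varphi^n_q(x)=f_{\theta^{n-1}q}\circ\cdots\circ f_q(x)$ for $n\geq1$. The pair $(\varphi^n_q(x_0),\varphi^n_q(y_0))_n$ with the same $q$ is called the two-point motion. *)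

theory Defs
  imports "HOL-Probability.Probability"
begin

definition noise_space :: "(nat \<Rightarrow> real) measure" where
  "noise_space = PiM (UNIV :: nat set) (\<lambda>_. uniform_measure lborel {0..1::real})"

definition shift :: "(nat \<Rightarrow> real) \<Rightarrow> (nat \<Rightarrow> real)" where
  "shift q = (\<lambda>n. q (Suc n))"

text \<open>One step f_q of the embedded birth-death chain (x - 1 is truncated subtraction on nat;
  the case x = 0 with q 0 >= 1 is a null event).\<close>
definition bd_step :: "real \<Rightarrow> real \<Rightarrow> (nat \<Rightarrow> real) \<Rightarrow> nat \<Rightarrow> nat" where
  "bd_step g1 g2 q x = (if q 0 < g1 / (g1 + g2 * real x) then x + 1 else x - 1)"

fun bd_cocycle :: "real \<Rightarrow> real \<Rightarrow> nat \<Rightarrow> (nat \<Rightarrow> real) \<Rightarrow> nat \<Rightarrow> nat" where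
  "bd_cocycle g1 g2 0 q x = x"
| "bd_cocycle g1 g2 (Suc n) q x = bd_step g1 g2 ((shift ^^ n) q) (bd_cocycle g1 g2 n q x)"

end

theory Submission
  imports Defs
begin


lemma abstract_zero:
  fixes u a b :: "nat \<Rightarrow> real"
  assumes u01: "\<And>y. 0 \<le> u y \<and> u y \<le> 1"
    and ab: "\<And>y. 0 \<le> a y \<and> a y < b y \<and> b y \<le> 1"
    and tail: "\<And>y. y \<ge> N \<Longrightarrow> a y + b y \<le> 1"
    and rec: "\<And>y. u y = a y * u (Suc y) + (if y = 0 then 0 else (1 - b y) * u (y - 1))"
  shows "u y = 0"
proof -
  define C where "C = 1 + a 0 / (1 - a 0) + (\<Sum>z<N. \<bar>(a z + b z - 1) / (b z - a z)\<bar>)"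
  have a0: "a 0 < 1" using ab[of 0] by linarith
  have C1: "a 0 / (1 - a 0) \<le> C" unfolding C_def by (simp add: sum_nonneg)
  have C2: "1 + a 0 / (1 - a 0) \<le> C" unfolding C_def by (simp add: sum_nonneg)
  have "0 \<le> a 0 / (1 - a 0)" using a0 ab[of 0] by simp
  then have C0: "0 < C" using C2 by linarith
  define w where "w z = real z + C" for z
  have super: "a z * w (Suc z) + (if z = 0 then 0 else (1 - b z) * w (z - 1)) \<le> w z" for z
  proof (cases "z = 0")
    case True
    have "a 0 \<le> C * (1 - a 0)" using C1 a0 by (simp add: divide_le_eq)
    then show ?thesis using True by (simp add: w_def algebra_simps)
  next
    case False
    have key: "a z + b z - 1 \<le> (b z - a z) * (real z + C)"
    proof (cases "z \<ge> N")
      case True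
      then show ?thesis using tail[OF True] ab[of z] C0
        by (smt (verit) mult_nonneg_nonneg of_nat_0_le_iff)
    next
      case f: False
      have "\<bar>(a z + b z - 1) / (b z - a z)\<bar> \<le> (\<Sum>z<N. \<bar>(a z + b z - 1) / (b z - a z)\<bar>)"
        by (rule member_le_sum) (use f in auto)
      also have "\<dots> \<le> C" unfolding C_def using a0 ab[of 0] by (simp add: divide_nonneg_pos)
      finally have "(a z + b z - 1) / (b z - a z) \<le> real z + C" by linarith
      then show ?thesis using ab[of z] by (simp add: divide_le_eq mult.commute)
    qed
    have "a z * w (Suc z) + (1 - b z) * w (z - 1) = a z * (real z + C + 1) + (1 - b z) * (real z + C - 1)"
      using False by (simp add: w_def of_nat_diff algebra_simps)
    also have "\<dots> \<le> real z + C" using key by (simp add: algebra_simps)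
    finally show ?thesis using False by (simp add: w_def)
  qed
  have bound: "u y \<le> e * w y" if e: "e > 0" for e y
  proof (rule ccontr)
    assume neg: "\<not> u y \<le> e * w y"
    define h where "h z = u z - e * w z" for z
    define K where "K = nat \<lceil>1 / e\<rceil>"
    have hneg: "h z < 0" if "z > K" for z
    proof -
      have "1 / e \<le> real K" unfolding K_def by linarith
      also have "\<dots> < real z" using that by simp
      finally have "1 < e * real z" using e by (simp add: field_simps)
      moreover have "e * real z \<le> e * w z" using C0 e by (simp add: w_def)
      ultimately show ?thesis using u01[of z] by (simp add: h_def)
    qed
    have hy: "h y > 0" using neg by (simp add: h_def)
    have yK: "y \<le> K" using hy hneg by (meson not_less order.asym)
    have fin: "finite (h ` {..K})" by simp
    have "Max (h ` {..K}) \<in> h ` {..K}" using fin by (intro Max_in) auto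
    then obtain m where m: "m \<le> K" "h m = Max (h ` {..K})" by (metis atMost_iff imageE)
    have hm: "h z \<le> h m" if "z \<le> K" for z
      using m(2) fin that by (metis Max_ge atMost_iff imageI)
    have hpos: "h m > 0" using hm[OF yK] hy by linarith
    have hall: "h z \<le> h m" for z
    proof (cases "z \<le> K")
      case True then show ?thesis by (rule hm)
    next
      case False then have "h z < 0" by (intro hneg) simp
      then show ?thesis using hpos by simp
    qed
    define c where "c = (if m = 0 then 0 else 1 - b m)"
    have c0: "0 \<le> c" and ac: "a m + c < 1" using ab[of m] a0 by (auto simp: c_def)
    have "h m = a m * h (Suc m) + c * h (m - 1) + e * (a m * w (Suc m) + c * w (m - 1) - w m)"
      using rec[of m] by (simp add: h_def c_def algebra_simps)
    also have "\<dots> \<le> a m * h (Suc m) + c * h (m - 1)"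
    proof -
      have "a m * w (Suc m) + c * w (m - 1) - w m \<le> 0" 
      proof (cases "m = 0")
        case True then show ?thesis using super[of 0] by (simp add: c_def)
      next
        case False then show ?thesis using super[of m] by (simp add: c_def)
      qed
      then have "e * (a m * w (Suc m) + c * w (m - 1) - w m) \<le> 0"
        using e by (intro mult_nonneg_nonpos) auto
      then show ?thesis by linarith
    qed
    also have "\<dots> \<le> a m * h m + c * h m"
      using hall[of "Suc m"] hall[of "m - 1"] ab[of m] c0
      by (intro add_mono mult_left_mono) auto
    also have "\<dots> = (a m + c) * h m" by (simp add: distrib_right)
    also have "\<dots> < 1 * h m" using ac hpos by (intro mult_strict_right_mono) auto
    finally show False by simp
  qed
  show "u y = 0"
  proof (rule ccontr)
    assume "u y \<noteq> 0"
    then have up: "u y > 0" using u01[of y] by simp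
    have wp: "w y > 0" using C0 by (simp add: w_def add_nonneg_pos)
    define e where "e = u y / (2 * w y)"
    have ep: "e > 0" using up wp by (simp add: e_def)
    have "u y \<le> e * w y" by (rule bound[OF ep])
    also have "\<dots> = u y / 2" using wp by (simp add: e_def)
    finally show False using up by simp
  qed
qed


lemma shift_pow: "(shift ^^ n) q = (\<lambda>k. q (k + n))"
  by (induction n arbitrary: q) (auto simp: shift_def)

lemma cocycle_Suc': "bd_cocycle g1 g2 (Suc n) q x = bd_cocycle g1 g2 n (shift q) (bd_step g1 g2 q x)"
proof (induction n arbitrary: x)
  case 0 then show ?case by simp
next
  case (Suc n)
  have "(shift ^^ Suc n) q = (shift ^^ n) (shift q)" by (simp only: funpow_Suc_right o_apply)
  then show ?case using Suc by (simp del: funpow.simps)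
qed

lemma space_noise: "space noise_space = UNIV"
  by (simp add: noise_space_def space_PiM)

lemma meas_cocycle: "(\<lambda>q. bd_cocycle g1 g2 n q x) \<in> noise_space \<rightarrow>\<^sub>M count_space UNIV"
proof (induction n)
  case 0 then show ?case by simp
next
  case (Suc n)
  have eq: "(\<lambda>q. bd_cocycle g1 g2 (Suc n) q x) = (\<lambda>q. if q n < g1 / (g1 + g2 * real (bd_cocycle g1 g2 n q x))
      then bd_cocycle g1 g2 n q x + 1 else bd_cocycle g1 g2 n q x - 1)"
    by (simp add: bd_step_def shift_pow del: funpow.simps)
  have [measurable]: "(\<lambda>q. q n) \<in> borel_measurable noise_space"
    unfolding noise_space_def by measurable
  have "(\<lambda>q. (\<lambda>k q. if q n < g1 / (g1 + g2 * real k) then k + 1 else k - 1) (bd_cocycle g1 g2 n q x) q)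
     \<in> noise_space \<rightarrow>\<^sub>M count_space UNIV"
    by (rule measurable_compose_countable[OF _ Suc]) measurable
  then show ?case unfolding eq by simp
qed

lemma meas_shift: "shift \<in> noise_space \<rightarrow>\<^sub>M noise_space"
  unfolding noise_space_def shift_def
  by (intro measurable_PiM_single') (auto simp: space_PiM)



abbreviation "UM \<equiv> uniform_measure lborel {0..1::real}"

lemma UM_prob: "prob_space UM"
  by (intro prob_space_uniform_measure) auto

lemma prod_meas:
  assumes A: "A \<in> sets borel" and B: "B \<in> sets noise_space"
  shows "{q. q 0 \<in> A \<and> shift q \<in> B} \<in> sets noise_space"
    and "measure noise_space {q. q 0 \<in> A \<and> shift q \<in> B} = measure UM A * measure noise_space B"
proof -
  interpret M: prob_space UM by (rule UM_prob)
  interpret S: sequence_space UM ..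
  have NS: "noise_space = S.S" by (simp add: noise_space_def)
  have [measurable]: "(\<lambda>q. q 0) \<in> borel_measurable noise_space"
    unfolding noise_space_def by measurable
  note meas_shift[measurable] 
  note A[measurable] B[measurable]
  show T: "{q. q 0 \<in> A \<and> shift q \<in> B} \<in> sets noise_space"
  proof -
    have "{q. q 0 \<in> A \<and> shift q \<in> B} = ((\<lambda>q. q 0) -` A \<inter> space noise_space) \<inter> (shift -` B \<inter> space noise_space)"
      by (auto simp: space_noise)
    also have "\<dots> \<in> sets noise_space"
      by (intro sets.Int measurable_sets[OF _ A] measurable_sets[OF meas_shift B]) measurable
    finally show ?thesis .
  qed
  have pre: "(\<lambda>(s, \<omega>). case_nat s \<omega>) -` {q. q 0 \<in> A \<and> shift q \<in> B} \<inter> space (UM \<Otimes>\<^sub>M S.S) = A \<times> B"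
    by (auto simp: space_pair_measure space_PiM shift_def)
  have "emeasure noise_space {q. q 0 \<in> A \<and> shift q \<in> B}
      = emeasure (distr (UM \<Otimes>\<^sub>M S.S) S.S (\<lambda>(s, \<omega>). case_nat s \<omega>)) {q. q 0 \<in> A \<and> shift q \<in> B}"
    using S.PiM_iter NS by simp
  also have "\<dots> = emeasure (UM \<Otimes>\<^sub>M S.S) (A \<times> B)"
  proof -
    have cm: "(\<lambda>(s, \<omega>). case_nat s \<omega>) \<in> UM \<Otimes>\<^sub>M S.S \<rightarrow>\<^sub>M S.S"
    proof -
      have "(\<lambda>p. case_nat (fst p) (snd p)) \<in> UM \<Otimes>\<^sub>M S.S \<rightarrow>\<^sub>M S.S" by measurable
      then show ?thesis by (simp add: case_prod_beta')
    qed
    show ?thesis using T NS pre by (subst emeasure_distr[OF cm]) auto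
  qed
  also have "\<dots> = emeasure UM A * emeasure S.S B"
    using A B NS by (intro S.P.emeasure_pair_measure_Times) auto
  finally show "measure noise_space {q. q 0 \<in> A \<and> shift q \<in> B} = measure UM A * measure noise_space B"
    using NS by (simp add: measure_def enn2real_mult)
qed



lemma NS_prob: "prob_space noise_space"
  unfolding noise_space_def by (intro prob_space_PiM UM_prob)

lemma UM_lt: assumes "0 \<le> a" "a \<le> 1" shows "measure UM {..<a} = a"
proof -
  have "{0..1::real} \<inter> {..<a} = {0..<a}" using assms by auto
  then show ?thesis using assms by simp
qed

lemma UM_ge: assumes "0 \<le> b" "b \<le> 1" shows "measure UM {b..} = 1 - b"
proof -
  have "{0..1::real} \<inter> {b..} = {b..1}" using assms by auto
  then show ?thesis using assms by simp
qed

definition StayG :: "real \<Rightarrow> real \<Rightarrow> nat \<Rightarrow> nat \<Rightarrow> nat \<Rightarrow> (nat \<Rightarrow> real) set" where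
  "StayG g1 g2 D X Y = {q. \<forall>n. bd_cocycle g1 g2 n q X = bd_cocycle g1 g2 n q Y + D}"

lemma StayG_sets: "StayG g1 g2 D X Y \<in> sets noise_space"
proof -
  have "Measurable.pred noise_space (\<lambda>q. bd_cocycle g1 g2 n q X = bd_cocycle g1 g2 n q Y + D)" for n
  proof -
    have [measurable]: "(\<lambda>q. bd_cocycle g1 g2 n q X) \<in> noise_space \<rightarrow>\<^sub>M count_space UNIV"
      by (rule meas_cocycle)
    have inner: "Measurable.pred noise_space (\<lambda>q. bd_cocycle g1 g2 n q X = k + D)" for k
      by (rule pred_count_space_const1[OF meas_cocycle])
    show ?thesis by (rule measurable_compose_countable[OF inner meas_cocycle])
  qed
  then have "Measurable.pred noise_space (\<lambda>q. \<forall>n. bd_cocycle g1 g2 n q X = bd_cocycle g1 g2 n q Y + D)"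
    by (intro pred_intros_countable) simp
  then show ?thesis unfolding StayG_def pred_def by (simp add: space_noise)
qed

lemma StayG_step: "q \<in> StayG g1 g2 D X Y \<longleftrightarrow>
   X = Y + D \<and> shift q \<in> StayG g1 g2 D (bd_step g1 g2 q X) (bd_step g1 g2 q Y)"
proof -
  have "(\<forall>n. bd_cocycle g1 g2 n q X = bd_cocycle g1 g2 n q Y + D) \<longleftrightarrow>
      bd_cocycle g1 g2 0 q X = bd_cocycle g1 g2 0 q Y + D \<and>
      (\<forall>n. bd_cocycle g1 g2 (Suc n) q X = bd_cocycle g1 g2 (Suc n) q Y + D)"
    by (metis not0_implies_Suc)
  then show ?thesis unfolding StayG_def by (simp only: cocycle_Suc' mem_Collect_eq) simp
qed

lemma StayG_empty: "X \<noteq> Y + D \<Longrightarrow> StayG g1 g2 D X Y = {}"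
  unfolding StayG_def by (auto intro: exI[of _ 0])



definition pr :: "real \<Rightarrow> real \<Rightarrow> nat \<Rightarrow> real" where
  "pr g1 g2 z = g1 / (g1 + g2 * real z)"

lemma pr_props:
  assumes "g1 > 0" "g2 > 0"
  shows "0 < pr g1 g2 z" "pr g1 g2 z \<le> 1" "z < z' \<Longrightarrow> pr g1 g2 z' < pr g1 g2 z"
    "g1 \<le> g2 * real z \<Longrightarrow> pr g1 g2 z \<le> 1/2"
proof -
  have d: "g1 + g2 * real z > 0" for z using assms by (simp add: add_pos_nonneg)
  show "0 < pr g1 g2 z" using assms d by (simp add: pr_def)
  show "pr g1 g2 z \<le> 1" using assms d[of z] by (simp add: pr_def divide_le_eq)
  show "z < z' \<Longrightarrow> pr g1 g2 z' < pr g1 g2 z"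
    using assms d[of z] d[of z'] unfolding pr_def
    by (intro divide_strict_left_mono) (auto simp: mult_pos_pos)
  show "g1 \<le> g2 * real z \<Longrightarrow> pr g1 g2 z \<le> 1/2"
    using assms d[of z] by (simp add: pr_def divide_le_eq)
qed

lemma step_eq: "bd_step g1 g2 q x = (if q 0 < pr g1 g2 x then x + 1 else x - 1)"
  by (simp add: bd_step_def pr_def)

lemma decomp:
  assumes g: "g1 > 0" "g2 > 0" and D: "D > 0"
  shows "StayG g1 g2 D (y + D) y =
     {q. q 0 \<in> {..<pr g1 g2 (y + D)} \<and> shift q \<in> StayG g1 g2 D (Suc y + D) (Suc y)} \<union>
     {q. q 0 \<in> (if y = 0 then {} else {pr g1 g2 y..}) \<and> shift q \<in> StayG g1 g2 D (y - 1 + D) (y - 1)}"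
    (is "?L = ?A \<union> ?B")
proof (intro set_eqI)
  fix q
  have ab: "pr g1 g2 (y + D) < pr g1 g2 y" using pr_props(3)[OF g, of y "y + D"] D by simp
  show "q \<in> ?L \<longleftrightarrow> q \<in> ?A \<union> ?B"
  proof (cases "q 0 < pr g1 g2 (y + D)")
    case True
    then have "q 0 < pr g1 g2 y" using ab by simp
    then show ?thesis using True ab by (subst StayG_step) (auto simp: step_eq)
  next
    case F1: False
    show ?thesis
    proof (cases "q 0 < pr g1 g2 y")
      case True
      then show ?thesis using F1 D by (subst StayG_step) (auto simp: step_eq StayG_empty)
    next
      case False
      show ?thesis
      proof (cases "y = 0")
        case True
        then show ?thesis using F1 False D by (subst StayG_step) (auto simp: step_eq StayG_empty)
      next
        case y0: False
        have e: "y + D - 1 = y - 1 + D" using y0 by simp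
        show ?thesis using F1 False D y0 by (subst StayG_step) (auto simp: step_eq e)
      qed
    qed
  qed
qed



lemma main_zero:
  assumes g: "g1 > 0" "g2 > 0" and D: "D > 0"
  shows "measure noise_space (StayG g1 g2 D (y + D) y) = 0"
proof -
  interpret P: prob_space noise_space by (rule NS_prob)
  define u where "u y = measure noise_space (StayG g1 g2 D (y + D) y)" for y
  define a where "a y = pr g1 g2 (y + D)" for y
  define b where "b y = pr g1 g2 y" for y
  have ab: "0 \<le> a y \<and> a y < b y \<and> b y \<le> 1" for y
  proof -
    have "0 < a y" unfolding a_def by (rule pr_props(1)[OF g])
    moreover have "a y < b y" unfolding a_def b_def by (rule pr_props(3)[OF g]) (use D in simp)
    moreover have "b y \<le> 1" unfolding b_def by (rule pr_props(2)[OF g])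
    ultimately show ?thesis by simp
  qed
  define N where "N = nat \<lceil>g1 / g2\<rceil>"
  have tail: "a y + b y \<le> 1" if "y \<ge> N" for y
  proof -
    have "g1 / g2 \<le> real N" unfolding N_def by linarith
    also have "\<dots> \<le> real y" using that by simp
    finally have "g1 \<le> g2 * real y" using g by (simp add: divide_le_eq mult.commute)
    then have "b y \<le> 1/2" unfolding b_def by (rule pr_props(4)[OF g])
    moreover have "a y \<le> b y" using ab[of y] by simp
    ultimately show ?thesis by simp
  qed
  have u01: "0 \<le> u y \<and> u y \<le> 1" for y
    unfolding u_def by (simp add: P.prob_le_1)
  have rec: "u y = a y * u (Suc y) + (if y = 0 then 0 else (1 - b y) * u (y - 1))" for y
  proof -
    let ?A = "{q. q 0 \<in> {..<pr g1 g2 (y + D)} \<and> shift q \<in> StayG g1 g2 D (Suc y + D) (Suc y)}"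
    let ?B = "{q. q 0 \<in> (if y = 0 then {} else {pr g1 g2 y..}) \<and> shift q \<in> StayG g1 g2 D (y - 1 + D) (y - 1)}"
    have As: "?A \<in> sets noise_space" by (rule prod_meas(1)) (auto intro: StayG_sets)
    have Bs: "?B \<in> sets noise_space" by (rule prod_meas(1)) (auto intro: StayG_sets)
    have disj: "?A \<inter> ?B = {}" using ab[of y] unfolding a_def b_def by auto
    have "u y = measure noise_space (?A \<union> ?B)" unfolding u_def by (subst decomp[OF g D, of y]) (rule refl)
    also have "\<dots> = measure noise_space ?A + measure noise_space ?B"
      using As Bs disj by (rule P.finite_measure_Union)
    also have "measure noise_space ?A = a y * u (Suc y)"
    proof -
      have "measure noise_space ?A = measure UM {..<pr g1 g2 (y + D)} * measure noise_space (StayG g1 g2 D (Suc y + D) (Suc y))"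
        by (rule prod_meas(2)) (auto intro: StayG_sets)
      also have "measure UM {..<pr g1 g2 (y + D)} = a y" using ab[of y] unfolding a_def by (intro UM_lt) auto
      finally show ?thesis unfolding u_def by simp
    qed
    also have "measure noise_space ?B = (if y = 0 then 0 else (1 - b y) * u (y - 1))"
    proof (cases "y = 0")
      case True then show ?thesis by simp
    next
      case False
      then show ?thesis
      proof -
        have "measure noise_space ?B = measure UM {pr g1 g2 y..} * measure noise_space (StayG g1 g2 D (y - 1 + D) (y - 1))"
          using False prod_meas(2)[of "{pr g1 g2 y..}" "StayG g1 g2 D (y - 1 + D) (y - 1)"]
          by (simp add: StayG_sets)
        also have "measure UM {pr g1 g2 y..} = 1 - b y" using ab[of y] unfolding b_def by (intro UM_ge) auto
        finally show ?thesis unfolding u_def using False by simp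
      qed
    qed
    finally show ?thesis .
  qed
  have "u y = 0" by (rule abstract_zero[OF u01 ab tail rec])
  then show ?thesis by (simp add: u_def)
qed


theorem lemma3p2:
  fixes g1 g2 :: real and d :: int and x0 y0 :: nat
  assumes "g1 > 0" and "g2 > 0" and "d \<noteq> 0" and "int x0 - int y0 = d"
  shows "{q \<in> space noise_space. \<forall>n. int (bd_cocycle g1 g2 n q x0) - int (bd_cocycle g1 g2 n q y0) = d}
           \<in> sets noise_space
       \<and> measure noise_space
           {q \<in> space noise_space. \<forall>n. int (bd_cocycle g1 g2 n q x0) - int (bd_cocycle g1 g2 n q y0) = d} = 0"
proof -
  let ?S = "{q \<in> space noise_space. \<forall>n. int (bd_cocycle g1 g2 n q x0) - int (bd_cocycle g1 g2 n q y0) = d}"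
  have g: "g1 > 0" "g2 > 0" using assms by auto
  show ?thesis
  proof (cases "d > 0")
    case True
    define D where "D = nat d"
    have D: "D > 0" and x0: "x0 = y0 + D" using True assms(4) by (auto simp: D_def)
    have key: "(int a - int b = d) \<longleftrightarrow> (a = b + D)" for a b using True by (auto simp: D_def)
    have "?S = StayG g1 g2 D (y0 + D) y0"
      unfolding StayG_def space_noise x0 key by simp
    then show ?thesis using main_zero[OF g D, of y0] StayG_sets by simp
  next
    case False
    then have neg: "d < 0" using assms(3) by simp
    define D where "D = nat (- d)"
    have D: "D > 0" and y0: "y0 = x0 + D" using neg assms(4) by (auto simp: D_def)
    have key: "(int a - int b = d) \<longleftrightarrow> (b = a + D)" for a b using neg by (auto simp: D_def)
    have "?S = StayG g1 g2 D (x0 + D) x0"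
      unfolding StayG_def space_noise y0 key by simp
    then show ?thesis using main_zero[OF g D, of x0] StayG_sets by simp
  qed
qed

end
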